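(* Let $H$ and $K$ be finite-dimensional complex Hilbert spaces, let $A\subseteq B(H)$ be a real operator system (a real linear subspace of the self-adjoint operators in $B(H)$ with $1\in A$), and let $\mathcal{C}$ be a mapping cone on $K$. Let $\phi: A\to B(K)$ be a real-linear map that is $\mathcal{C}$-positive. Then there exists a $\mathcal{C}$-positive linear map $\psi: B(H)\to B(K)$ such that $\psi(a)=\phi(a)$ for all $a\in A$.
   Context: A mapping cone $\mathcal{C}$ on $K$ is a closed convex cone of positive linear maps $B(K)\to B(K)$ such that $\alpha\in\mathcal{C}$ implies $\beta\circ\alpha\circ\gamma\in\mathcal{C}$ for all completely positive maps $\beta,\gamma: B(K)\to B(K)$. Fix an orthonormal basis of $K$ and let $b^t$ denote the transpose of $b\in B(K)$ with respect to it; $Tr$ is the usual trace. For a real or complex linear subspace $A\subseteq B(H)$ containing $1$, let $A\otimes B(K)\subseteq B(H)\otimes B(K)=B(H\otimes K)$ denote the linear span of $\{a\otimes b: a\in A, b\in B(K)\}$. For a (real-)linear map $\phi: A\to B(K)$, its dual functional $\tilde\phi$ is the linear functional on $A\otimes B(K)$ determined by $\tilde\phi(a\otimes b)=Tr(\phi(a)b^t)$. Define $P(A,\mathcal{C})=\{x\in (A\otimes B(K))_{sa} : (\iota\otimes\alpha)(x)\ge 0 \text{ for all } \alpha\in\mathcal{C}\}$, where $\iota$ is the identity map on $B(H)$ and $(\cdot)_{sa}$ denotes self-adjoint elements. The map $\phi$ is called $\mathcal{C}$-positive if $\tilde\phi(x)\ge 0$ for all $x\in P(A,\mathcal{C})$.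 (For $A=B(H)$ this applies to maps $\psi: B(H)\to B(K)$.) *)

theory Defs
  imports "HOL-Analysis.Analysis"
begin

text \<open>H = C^'n and K = C^'m with fixed orthonormal (standard) bases;
  B(H) is identified with complex^'n^'n, B(K) with complex^'m^'m and
  B(H (x) K) with complex^('n * 'm)^('n * 'm) (product basis).\<close>

definition mat_adj :: "complex^'k::finite^'k \<Rightarrow> complex^'k^'k" where
  "mat_adj a = (\<chi> i j. cnj (a $ j $ i))"

definition cscale :: "complex \<Rightarrow> complex^'k::finite^'k \<Rightarrow> complex^'k^'k" where
  "cscale c a = (\<chi> i j. c * a $ i $ j)"

definition sform :: "complex^'k::finite \<Rightarrow> complex^'k^'k \<Rightarrow> complex^'k \<Rightarrow> complex" where
  "sform u M w = (\<Sum>r\<in>UNIV. \<Sum>s\<in>UNIV. cnj (u $ r) * M $ r $ s * w $ s)"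

definition psd :: "complex^'k::finite^'k \<Rightarrow> bool" where
  "psd M \<longleftrightarrow> (\<forall>v. sform v M v \<in> \<real> \<and> 0 \<le> Re (sform v M v))"

text \<open>Positivity of a q x q block matrix X = [X i j] in M_q(B(K)) = B(C^q (x) K).\<close>
definition block_psd :: "nat \<Rightarrow> (nat \<Rightarrow> nat \<Rightarrow> complex^'k::finite^'k) \<Rightarrow> bool" where
  "block_psd q X \<longleftrightarrow> (\<forall>v :: nat \<Rightarrow> complex^'k.
      (\<Sum>i<q. \<Sum>j<q. sform (v i) (X i j) (v j)) \<in> \<real> \<and>
      0 \<le> Re (\<Sum>i<q. \<Sum>j<q. sform (v i) (X i j) (v j)))"

definition complex_linear_map :: "(complex^'a::finite^'a \<Rightarrow> complex^'b::finite^'b) \<Rightarrow> bool" where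
  "complex_linear_map f \<longleftrightarrow> (\<forall>x y. f (x + y) = f x + f y) \<and> (\<forall>c x. f (cscale c x) = cscale c (f x))"

definition positive_map :: "(complex^'a::finite^'a \<Rightarrow> complex^'b::finite^'b) \<Rightarrow> bool" where
  "positive_map f \<longleftrightarrow> complex_linear_map f \<and> (\<forall>x. psd x \<longrightarrow> psd (f x))"

definition completely_positive :: "(complex^'a::finite^'a \<Rightarrow> complex^'b::finite^'b) \<Rightarrow> bool" where
  "completely_positive f \<longleftrightarrow> complex_linear_map f \<and>
     (\<forall>q X. block_psd q X \<longrightarrow> block_psd q (\<lambda>i j. f (X i j)))"

text \<open>Mapping cone on K (closedness in the pointwise = finite-dim. topology).\<close>
definition mapping_cone :: "(complex^'m::finite^'m \<Rightarrow> complex^'m^'m) set \<Rightarrow> bool" where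
  "mapping_cone C \<longleftrightarrow>
     (\<forall>\<alpha>\<in>C. positive_map \<alpha>) \<and> closed C \<and>
     (\<forall>\<alpha>\<in>C. \<forall>\<beta>\<in>C. (\<lambda>x. \<alpha> x + \<beta> x) \<in> C) \<and>
     (\<forall>\<alpha>\<in>C. \<forall>t::real. t \<ge> 0 \<longrightarrow> (\<lambda>x. t *\<^sub>R \<alpha> x) \<in> C) \<and>
     (\<forall>\<alpha>\<in>C. \<forall>\<beta> \<gamma>. completely_positive \<beta> \<longrightarrow> completely_positive \<gamma> \<longrightarrow> \<beta> \<circ> \<alpha> \<circ> \<gamma> \<in> C)"

definition real_operator_system :: "(complex^'n::finite^'n) set \<Rightarrow> bool" where
  "real_operator_system A \<longleftrightarrow> subspace A \<and> (\<forall>a\<in>A. mat_adj a = a) \<and> mat 1 \<in> A"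

definition real_linear_on :: "(complex^'n::finite^'n) set \<Rightarrow> (complex^'n^'n \<Rightarrow> complex^'m::finite^'m) \<Rightarrow> bool" where
  "real_linear_on A \<phi> \<longleftrightarrow> (\<forall>x\<in>A. \<forall>y\<in>A. \<phi> (x + y) = \<phi> x + \<phi> y) \<and>
     (\<forall>r::real. \<forall>x\<in>A. \<phi> (r *\<^sub>R x) = r *\<^sub>R \<phi> x)"

definition tens :: "complex^'n::finite^'n \<Rightarrow> complex^'m::finite^'m \<Rightarrow> complex^('n \<times> 'm)^('n \<times> 'm)" where
  "tens a b = (\<chi> p q. a $ fst p $ fst q * b $ snd p $ snd q)"

text \<open>A (x) B(K): linear span of elementary tensors (real and complex span coincide).\<close>
definition tens_space :: "(complex^'n::finite^'n) set \<Rightarrow> (complex^('n \<times> 'm::finite)^('n \<times> 'm)) set" where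
  "tens_space A = span {tens a (b :: complex^'m^'m) | a b. a \<in> A}"

text \<open>(iota (x) alpha)(x), the linear extension of a (x) b |-> a (x) alpha(b), blockwise.\<close>
definition id_tens :: "(complex^'m::finite^'m \<Rightarrow> complex^'m^'m) \<Rightarrow> complex^('n::finite \<times> 'm)^('n \<times> 'm)
     \<Rightarrow> complex^('n \<times> 'm)^('n \<times> 'm)" where
  "id_tens \<alpha> x = (\<chi> p q. \<alpha> (\<chi> k l. x $ (fst p, k) $ (fst q, l)) $ snd p $ snd q)"

definition P_cone :: "(complex^'n::finite^'n) set \<Rightarrow> (complex^'m::finite^'m \<Rightarrow> complex^'m^'m) set
     \<Rightarrow> (complex^('n \<times> 'm)^('n \<times> 'm)) set" where
  "P_cone A C = {x \<in> tens_space A. mat_adj x = x \<and> (\<forall>\<alpha>\<in>C. psd (id_tens \<alpha> x))}"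

text \<open>c is the value of the dual functional tilde-phi at x, computed from a representation
  x = sum_i a_i (x) b_i with a_i in A, via tilde-phi(a (x) b) = Tr(phi(a) b^t).
  (The value does not depend on the representation.)\<close>
definition dual_value :: "(complex^'n::finite^'n) set \<Rightarrow> (complex^'n^'n \<Rightarrow> complex^'m::finite^'m)
     \<Rightarrow> complex^('n \<times> 'm)^('n \<times> 'm) \<Rightarrow> complex \<Rightarrow> bool" where
  "dual_value A \<phi> x c \<longleftrightarrow> (\<exists>N a (b :: nat \<Rightarrow> complex^'m^'m). (\<forall>i<N. a i \<in> A) \<and> x = (\<Sum>i<N. tens (a i) (b i)) \<and>
      c = (\<Sum>i<N. trace (\<phi> (a i) ** transpose (b i))))"

definition C_positive :: "(complex^'n::finite^'n) set \<Rightarrow> (complex^'m::finite^'m \<Rightarrow> complex^'m^'m) set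
     \<Rightarrow> (complex^'n^'n \<Rightarrow> complex^'m^'m) \<Rightarrow> bool" where
  "C_positive A C \<phi> \<longleftrightarrow> (\<forall>x\<in>P_cone A C. \<forall>c. dual_value A \<phi> x c \<longrightarrow> c \<in> \<real> \<and> 0 \<le> Re c)"

end

theory Submission
  imports Defs
begin


lemma tens_add1: "tens (a + a') b = tens a b + tens a' b"
  by (simp add: tens_def vec_eq_iff algebra_simps)
lemma tens_add2: "tens a (b + b') = tens a b + tens a b'"
  by (simp add: tens_def vec_eq_iff algebra_simps)
lemma tens_cscale1: "tens (cscale c a) b = cscale c (tens a b)"
  by (simp add: tens_def cscale_def vec_eq_iff algebra_simps)
lemma tens_cscale2: "tens a (cscale c b) = cscale c (tens a b)"
  by (simp add: tens_def cscale_def vec_eq_iff algebra_simps)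

lemma scaleR_entry: "(r *\<^sub>R (x::complex^'a^'b)) $ i $ j = complex_of_real r * x $ i $ j"
  unfolding vector_scaleR_component by (simp add: scaleR_conv_of_real[where 'a=complex])

lemma cscale_of_real: "cscale (of_real r) x = r *\<^sub>R x"
  unfolding cscale_def vec_eq_iff by (simp add: scaleR_entry del: vector_scaleR_component)

lemma cscale_add: "cscale c (x + y) = cscale c x + cscale c y"
  by (simp add: cscale_def vec_eq_iff algebra_simps)
lemma cscale_zero[simp]: "cscale c 0 = 0"
  by (simp add: cscale_def vec_eq_iff)
lemma cscale_cscale: "cscale c (cscale d x) = cscale (c * d) x"
  by (simp add: cscale_def vec_eq_iff)
lemma cscale_one[simp]: "cscale 1 x = x"
  by (simp add: cscale_def vec_eq_iff)
lemma cscale_addc: "cscale (c + d) x = cscale c x + cscale d x"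
  by (simp add: cscale_def vec_eq_iff algebra_simps)

lemma mat_adj_add: "mat_adj (x + y) = mat_adj x + mat_adj y"
  by (simp add: mat_adj_def vec_eq_iff)
lemma mat_adj_zero[simp]: "mat_adj 0 = 0"
  by (simp add: mat_adj_def vec_eq_iff)
lemma mat_adj_cscale: "mat_adj (cscale c x) = cscale (cnj c) (mat_adj x)"
  by (simp add: mat_adj_def cscale_def vec_eq_iff)
lemma mat_adj_adj[simp]: "mat_adj (mat_adj x) = x"
  by (simp add: mat_adj_def vec_eq_iff)
lemma mat_adj_tens: "mat_adj (tens a b) = tens (mat_adj a) (mat_adj b)"
  by (simp add: mat_adj_def tens_def vec_eq_iff)
lemma mat_adj_scaleR: "mat_adj (r *\<^sub>R x) = r *\<^sub>R mat_adj x"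
  unfolding mat_adj_def vec_eq_iff by (simp add: scaleR_entry del: vector_scaleR_component)
lemma mat_adj_minus: "mat_adj (x - y) = mat_adj x - mat_adj y"
  by (simp add: mat_adj_def vec_eq_iff)
lemma mat_adj_uminus: "mat_adj (- x) = - mat_adj x"
  by (simp add: mat_adj_def vec_eq_iff)
lemma mat_adj_one: "mat_adj (mat 1) = mat 1"
  by (simp add: mat_adj_def mat_def vec_eq_iff)

lemma clm_zero: "complex_linear_map f \<Longrightarrow> f 0 = 0"
  unfolding complex_linear_map_def by (metis add_cancel_right_left)
lemma clm_add: "complex_linear_map f \<Longrightarrow> f (x + y) = f x + f y"
  unfolding complex_linear_map_def by blast
lemma clm_cscale: "complex_linear_map f \<Longrightarrow> f (cscale c x) = cscale c (f x)"
  unfolding complex_linear_map_def by blast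
lemma clm_scaleR: "complex_linear_map f \<Longrightarrow> f (r *\<^sub>R x) = r *\<^sub>R f x"
  using clm_cscale[of f "of_real r" x] by (simp add: cscale_of_real)

definition blk :: "complex^('n::finite \<times> 'm::finite)^('n \<times> 'm) \<Rightarrow> 'n \<Rightarrow> 'n \<Rightarrow> complex^'m^'m" where
  "blk x i j = (\<chi> k l. x $ (i, k) $ (j, l))"

lemma id_tens_blk: "id_tens \<alpha> x = (\<chi> p q. \<alpha> (blk x (fst p) (fst q)) $ snd p $ snd q)"
  by (simp add: id_tens_def blk_def)

lemma blk_add: "blk (x + y) i j = blk x i j + blk y i j"
  by (simp add: blk_def vec_eq_iff)
lemma blk_scaleR: "blk (r *\<^sub>R x) i j = r *\<^sub>R blk x i j"
  by (simp add: blk_def vec_eq_iff)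
lemma blk_tens: "blk (tens a b) i j = cscale (a $ i $ j) b"
  by (simp add: blk_def vec_eq_iff tens_def cscale_def)

lemma id_tens_add: "complex_linear_map \<alpha> \<Longrightarrow> id_tens \<alpha> (x + y) = id_tens \<alpha> x + id_tens \<alpha> y"
  unfolding id_tens_blk blk_add by (simp add: clm_add vec_eq_iff)

lemma id_tens_scaleR: "complex_linear_map \<alpha> \<Longrightarrow> id_tens \<alpha> (r *\<^sub>R x) = r *\<^sub>R id_tens \<alpha> x"
  unfolding id_tens_blk blk_scaleR by (simp add: clm_scaleR vec_eq_iff)

lemma id_tens_zero: "complex_linear_map \<alpha> \<Longrightarrow> id_tens \<alpha> 0 = 0"
  using id_tens_scaleR[of \<alpha> 0 0] by simp

lemma id_tens_tens: "complex_linear_map \<alpha> \<Longrightarrow> id_tens \<alpha> (tens a b) = tens a (\<alpha> b)"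
  unfolding id_tens_blk blk_tens by (simp only: clm_cscale) (simp add: vec_eq_iff tens_def cscale_def)

lemma sform_add: "sform v (M + N) w = sform v M w + sform v N w"
  by (simp add: sform_def algebra_simps sum.distrib)
lemma sform_scaleR: "sform v (r *\<^sub>R M) w = of_real r * sform v M w"
  by (simp add: sform_def scaleR_entry sum_distrib_left algebra_simps del: vector_scaleR_component)
lemma sform_zero: "sform v 0 w = 0"
  by (simp add: sform_def)

lemma psd_add: "psd M \<Longrightarrow> psd N \<Longrightarrow> psd (M + N)"
  unfolding psd_def sform_add by auto
lemma psd_scaleR: "psd M \<Longrightarrow> r \<ge> 0 \<Longrightarrow> psd (r *\<^sub>R M)"
  unfolding psd_def sform_scaleR by (auto intro: Reals_mult)
lemma psd_zero: "psd 0"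
  unfolding psd_def sform_zero by auto


definition outer :: "complex^'k::finite \<Rightarrow> complex^'k \<Rightarrow> complex^'k^'k" where
  "outer p q = (\<chi> i j. p $ i * cnj (q $ j))"

lemma sum_pairs: "(\<Sum>x\<in>(UNIV::('a::finite \<times> 'b::finite) set). f x) = (\<Sum>i\<in>UNIV. \<Sum>k\<in>UNIV. f (i,k))"
  using sum.cartesian_product'[of f "UNIV::'a set" "UNIV::'b set"] by (simp only: UNIV_Times_UNIV)

lemma sform_tens_outer:
  fixes v :: "complex^('n::finite \<times> 'm::finite)" and R :: "complex^'m^'m" and p :: "complex^'n"
  defines "y \<equiv> (\<chi> l. \<Sum>k\<in>UNIV. cnj (p $ k) * v $ (k,l))"
  shows "sform v (tens (outer p p) R) v = sform y R y"
proof -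
  define f where "f i k j l = cnj (v $ (i,k)) * (p $ i * cnj (p $ j) * R $ k $ l) * v $ (j,l)" for i k j l
  have "sform v (tens (outer p p) R) v = (\<Sum>i\<in>UNIV. \<Sum>k\<in>UNIV. \<Sum>j\<in>UNIV. \<Sum>l\<in>UNIV. f i k j l)"
    unfolding sform_def sum_pairs by (simp add: f_def tens_def outer_def)
  also have "\<dots> = (\<Sum>i\<in>UNIV. \<Sum>k\<in>UNIV. \<Sum>l\<in>UNIV. \<Sum>j\<in>UNIV. f i k j l)"
    by (rule sum.cong[OF refl], rule sum.cong[OF refl], rule sum.swap)
  also have "\<dots> = (\<Sum>k\<in>UNIV. \<Sum>i\<in>UNIV. \<Sum>l\<in>UNIV. \<Sum>j\<in>UNIV. f i k j l)"
    by (rule sum.swap)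
  also have "\<dots> = (\<Sum>k\<in>UNIV. \<Sum>l\<in>UNIV. \<Sum>i\<in>UNIV. \<Sum>j\<in>UNIV. f i k j l)"
    by (rule sum.cong[OF refl], rule sum.swap)
  also have "\<dots> = sform y R y"
  proof -
    have yk: "y $ k = (\<Sum>i\<in>UNIV. cnj (p$i) * v$(i,k))" for k
      by (simp add: y_def)
    have tm: "cnj (y$k) * R$k$l * y$l = (\<Sum>i\<in>UNIV. \<Sum>j\<in>UNIV. f i k j l)" for k l
    proof -
      have "cnj (y$k) * R$k$l * y$l = (\<Sum>i\<in>UNIV. p$i * cnj(v$(i,k)) * R$k$l) * (\<Sum>j\<in>UNIV. cnj(p$j) * v$(j,l))"
        by (simp add: yk sum_distrib_right)
      also have "\<dots> = (\<Sum>i\<in>UNIV. \<Sum>j\<in>UNIV. (p$i * cnj(v$(i,k)) * R$k$l) * (cnj(p$j) * v$(j,l)))"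
        by (rule sum_product)
      also have "\<dots> = (\<Sum>i\<in>UNIV. \<Sum>j\<in>UNIV. f i k j l)"
        by (simp add: f_def mult_ac)
      finally show ?thesis .
    qed
    show ?thesis unfolding sform_def tm ..
  qed
  finally show ?thesis .
qed

definition Tc :: "complex^'n::finite^'n \<Rightarrow> (complex^'m::finite^'m) itself \<Rightarrow> bool" where
  "Tc P T \<longleftrightarrow> (\<forall>R::complex^'m^'m. psd R \<longrightarrow> psd (tens P R))"

lemma Tc_add: "Tc P T \<Longrightarrow> Tc Q T \<Longrightarrow> Tc (P + Q) T"
  unfolding Tc_def tens_add1 by (auto intro: psd_add)

lemma tens_scaleR1: "tens (r *\<^sub>R a) b = r *\<^sub>R tens a b"
  by (simp add: tens_def vec_eq_iff scaleR_entry del: vector_scaleR_component)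
lemma tens_scaleR2: "tens a (r *\<^sub>R b) = r *\<^sub>R tens a b"
  by (simp add: tens_def vec_eq_iff scaleR_entry del: vector_scaleR_component)

lemma Tc_scaleR: "Tc P T \<Longrightarrow> r \<ge> 0 \<Longrightarrow> Tc (r *\<^sub>R P) T"
  unfolding Tc_def tens_scaleR1 by (auto intro: psd_scaleR)

lemma tens_zero1: "tens 0 b = 0"
  by (simp add: tens_def vec_eq_iff)
lemma tens_zero2: "tens a 0 = 0"
  by (simp add: tens_def vec_eq_iff)

lemma Tc_zero: "Tc 0 T"
  unfolding Tc_def tens_zero1 by (auto intro: psd_zero)

lemma Tc_sum: "finite S \<Longrightarrow> (\<And>i. i \<in> S \<Longrightarrow> Tc (f i) T) \<Longrightarrow> Tc (\<Sum>i\<in>S. f i) T"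
  by (induction S rule: finite_induct) (auto intro: Tc_add Tc_zero)

lemma Tc_outer: "Tc (outer p p) T"
  unfolding Tc_def
proof (intro allI impI)
  fix R :: "complex^'b^'b"
  assume "psd R"
  then show "psd (tens (outer p p) R)"
    unfolding psd_def sform_tens_outer by blast
qed

definition ev :: "'k::finite \<Rightarrow> complex^'k" where
  "ev r = (\<chi> a. if a = r then 1 else 0)"

definition Dg :: "'k::finite set \<Rightarrow> complex^'k^'k" where
  "Dg S = (\<chi> a b. if a = b \<and> a \<in> S then 1 else 0)"

lemma outer_ev: "outer (ev r) (ev r) $ a $ b = (if a = r \<and> b = r then 1 else 0)"
  by (simp add: outer_def ev_def)

lemma Dg_sum: "Dg S = (\<Sum>r\<in>S. outer (ev r) (ev r))"
proof -
  have "(\<Sum>r\<in>S. outer (ev r) (ev r)) $ a $ b = Dg S $ a $ b" for a b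
  proof -
    have "(\<Sum>r\<in>S. outer (ev r) (ev r)) $ a $ b = (\<Sum>r\<in>S. outer (ev r) (ev r) $ a $ b)"
      by (simp only: sum_component)
    also have "\<dots> = (\<Sum>r\<in>S. if r = a then (if a = b then 1 else 0) else 0)"
      by (rule sum.cong[OF refl]) (auto simp: outer_ev)
    also have "\<dots> = (if a \<in> S then (if a = b then 1 else 0) else 0)"
      by (rule sum.delta) simp
    finally show ?thesis by (simp add: Dg_def)
  qed
  then show ?thesis by (simp add: vec_eq_iff)
qed

lemma Tc_Dg: "Tc (Dg S) T"
  unfolding Dg_sum by (rule Tc_sum) (auto intro: Tc_outer)

lemma one_minus_ev: "mat 1 - outer (ev i) (ev i) = Dg (- {i})"
proof -
  have "(mat 1 - outer (ev i) (ev i)) $ a $ b = Dg (- {i}) $ a $ b" for a b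
    by (simp add: outer_ev Dg_def mat_def)
  then show ?thesis by (simp add: vec_eq_iff)
qed

definition pv :: "'k::finite \<Rightarrow> 'k \<Rightarrow> complex \<Rightarrow> complex^'k" where
  "pv i j c = (\<chi> r. if r = i then 1 else if r = j then c else 0)"

lemma two_minus_pv:
  assumes ij: "i \<noteq> j" and c1: "cnj c * c = 1"
  shows "2 *\<^sub>R mat 1 - outer (pv i j c) (pv i j c) = outer (pv i j (- c)) (pv i j (- c)) + 2 *\<^sub>R Dg (- {i, j})"
proof -
  have c2: "c * cnj c = 1" using c1 by (simp add: mult.commute)
  have L: "(2 *\<^sub>R mat 1 - outer (pv i j c) (pv i j c)) $ a $ b =
     (if a = b then 2 else 0) - (if a = i then 1 else if a = j then c else 0) * cnj (if b = i then 1 else if b = j then c else 0)" for a b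
    by (simp add: outer_def pv_def mat_def scaleR_entry del: vector_scaleR_component)
  have R: "(outer (pv i j (- c)) (pv i j (- c)) + 2 *\<^sub>R Dg (- {i, j})) $ a $ b =
     (if a = i then 1 else if a = j then -c else 0) * cnj (if b = i then 1 else if b = j then -c else 0)
      + (if a = b \<and> a \<noteq> i \<and> a \<noteq> j then 2 else 0)" for a b
    by (simp add: outer_def pv_def Dg_def scaleR_entry del: vector_scaleR_component)
  have "(if a = b then 2 else 0) - (if a = i then 1 else if a = j then c else 0) * cnj (if b = i then 1 else if b = j then c else 0)
     = (if a = i then 1 else if a = j then -c else 0) * cnj (if b = i then 1 else if b = j then -c else 0)
      + (if a = b \<and> a \<noteq> i \<and> a \<noteq> j then (2::complex) else 0)" for a b
  proof (cases "a = i")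
    case True
    then show ?thesis using ij by (cases "b = i"; cases "b = j") auto
  next
    case False
    then show ?thesis using ij c1 c2 by (cases "a = j"; cases "b = i"; cases "b = j") auto
  qed
  then show ?thesis unfolding vec_eq_iff using L R by simp
qed

definition Fam :: "complex^'n::finite^'n \<Rightarrow> (complex^'m::finite^'m) itself \<Rightarrow> bool" where
  "Fam P T \<longleftrightarrow> Tc P T \<and> (\<exists>l\<ge>0. Tc (l *\<^sub>R mat 1 - P) T)"

lemma Fam_ev: "Fam (outer (ev i) (ev i)) T"
  unfolding Fam_def
proof (intro conjI exI[of _ 1])
  show "Tc (outer (ev i) (ev i)) T" by (rule Tc_outer)
  show "Tc (1 *\<^sub>R mat 1 - outer (ev i) (ev i)) T"
    unfolding scaleR_one one_minus_ev by (rule Tc_Dg)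
qed simp

lemma Fam_pv: 
  assumes "i \<noteq> j" "cnj c * c = 1"
  shows "Fam (outer (pv i j c) (pv i j c)) T"
  unfolding Fam_def
proof (intro conjI exI[of _ 2])
  show "Tc (outer (pv i j c) (pv i j c)) T" by (rule Tc_outer)
  show "Tc (2 *\<^sub>R mat 1 - outer (pv i j c) (pv i j c)) T"
    unfolding two_minus_pv[OF assms] by (intro Tc_add Tc_outer Tc_scaleR Tc_Dg) simp
qed simp


lemma sform_one: "sform v (mat 1) v = of_real (\<Sum>r\<in>UNIV. (cmod (v$r))\<^sup>2)"
proof -
  have h: "cnj (v$r) * mat 1 $ r $ s * v $ s = (if s = r then cnj (v$r) * v$r else 0)" for r s
    by (simp add: mat_def)
  have "sform v (mat 1) v = (\<Sum>r\<in>UNIV. cnj (v $ r) * v $ r)"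
    unfolding sform_def h by simp
  also have "\<dots> = (\<Sum>r\<in>UNIV. of_real ((cmod (v$r))\<^sup>2))"
    by (rule sum.cong[OF refl]) (simp only: complex_norm_square mult.commute)
  finally show ?thesis by simp
qed

lemma psd_one: "psd (mat 1)"
  unfolding psd_def sform_one by (simp add: sum_nonneg)

lemma herm_real:
  assumes "mat_adj Z = Z"
  shows "sform v Z v \<in> \<real>"
proof -
  have Z: "cnj (Z $ r $ s) = Z $ s $ r" for r s
  proof -
    have "mat_adj Z $ s $ r = cnj (Z $ r $ s)" by (simp add: mat_adj_def)
    then show ?thesis using assms by simp
  qed
  have "cnj (sform v Z v) = (\<Sum>r\<in>UNIV. \<Sum>s\<in>UNIV. v $ r * Z $ s $ r * cnj (v $ s))"
    unfolding sform_def by (simp only: cnj_sum complex_cnj_mult complex_cnj_cnj Z)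
  also have "\<dots> = (\<Sum>s\<in>UNIV. \<Sum>r\<in>UNIV. v $ r * Z $ s $ r * cnj (v $ s))"
    by (rule sum.swap)
  also have "\<dots> = sform v Z v"
    unfolding sform_def by (rule sum.cong[OF refl], rule sum.cong[OF refl]) (simp only: mult_ac)
  finally show ?thesis using Reals_cnj_iff by blast
qed

lemma prod_le_N:
  fixes v :: "complex^'k::finite"
  shows "cmod (v$r) * cmod (v$s) \<le> (\<Sum>t\<in>UNIV. (cmod (v$t))\<^sup>2)"
proof -
  have le: "(cmod (v$t))\<^sup>2 \<le> (\<Sum>t\<in>UNIV. (cmod (v$t))\<^sup>2)" for t
    by (rule member_le_sum) auto
  have "cmod (v$r) * cmod (v$s) \<le> (cmod (v$r))\<^sup>2 \<or> cmod (v$r) * cmod (v$s) \<le> (cmod (v$s))\<^sup>2"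
  proof (cases "cmod (v$r) \<le> cmod (v$s)")
    case True
    then have "cmod (v$r) * cmod (v$s) \<le> cmod (v$s) * cmod (v$s)"
      by (intro mult_right_mono) auto
    then show ?thesis by (simp add: power2_eq_square)
  next
    case False
    then have "cmod (v$r) * cmod (v$s) \<le> cmod (v$r) * cmod (v$r)"
      by (intro mult_left_mono) auto
    then show ?thesis by (simp add: power2_eq_square)
  qed
  then show ?thesis using le[of r] le[of s] by linarith
qed

definition hs :: "complex^'k::finite^'k \<Rightarrow> real" where
  "hs Z = (\<Sum>r\<in>UNIV. \<Sum>s\<in>UNIV. cmod (Z $ r $ s))"

lemma hs_nonneg: "hs Z \<ge> 0"
  unfolding hs_def by (intro sum_nonneg) auto

lemma hs_uminus: "hs (- Z) = hs Z"
  unfolding hs_def by simp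

lemma herm_lower:
  "Re (sform v Z v) \<ge> - (hs Z * (\<Sum>t\<in>UNIV. (cmod (v$t))\<^sup>2))"
proof -
  let ?N = "\<Sum>t\<in>UNIV. (cmod (v$t))\<^sup>2"
  have tm: "Re (cnj (v $ r) * Z $ r $ s * v $ s) \<ge> - (cmod (Z $ r $ s) * ?N)" for r s
  proof -
    have "Re (cnj (v $ r) * Z $ r $ s * v $ s) \<ge> - cmod (cnj (v $ r) * Z $ r $ s * v $ s)"
      using abs_Re_le_cmod[of "cnj (v $ r) * Z $ r $ s * v $ s"] by linarith
    moreover have "cmod (cnj (v $ r) * Z $ r $ s * v $ s) = cmod (Z $ r $ s) * (cmod (v$r) * cmod (v$s))"
      by (simp add: norm_mult)
    moreover have "cmod (Z $ r $ s) * (cmod (v$r) * cmod (v$s)) \<le> cmod (Z $ r $ s) * ?N"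
      by (rule mult_left_mono[OF prod_le_N]) auto
    ultimately show ?thesis by linarith
  qed
  have "Re (sform v Z v) = (\<Sum>r\<in>UNIV. \<Sum>s\<in>UNIV. Re (cnj (v $ r) * Z $ r $ s * v $ s))"
    unfolding sform_def by (simp only: Re_sum)
  moreover have "(\<Sum>r\<in>UNIV. \<Sum>s\<in>UNIV. Re (cnj (v $ r) * Z $ r $ s * v $ s)) \<ge> (\<Sum>r\<in>UNIV. \<Sum>s\<in>UNIV. - (cmod (Z $ r $ s) * ?N))"
    by (intro sum_mono tm)
  moreover have "(\<Sum>r\<in>UNIV. \<Sum>s\<in>UNIV. - (cmod (Z $ r $ s) * ?N)) = - (hs Z * ?N)"
    unfolding hs_def by (simp only: sum_negf sum_distrib_right)
  ultimately show ?thesis by linarith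
qed

lemma herm_shift:
  fixes Z :: "complex^'k::finite^'k"
  assumes "mat_adj Z = Z"
  shows "psd (Z + hs Z *\<^sub>R mat 1)"
  unfolding psd_def
proof
  fix v :: "complex^'k"
  let ?N = "\<Sum>t\<in>UNIV. (cmod (v$t))\<^sup>2"
  have eq: "sform v (Z + hs Z *\<^sub>R mat 1) v = sform v Z v + of_real (hs Z * ?N)"
    by (simp add: sform_add sform_scaleR sform_one)
  show "sform v (Z + hs Z *\<^sub>R mat 1) v \<in> \<real> \<and> 0 \<le> Re (sform v (Z + hs Z *\<^sub>R mat 1) v)"
    unfolding eq using herm_real[OF assms, of v] herm_lower[where v=v and Z=Z] by (auto intro: Reals_add)
qed


definition e0 :: "complex^('n::finite \<times> 'm::finite)^('n \<times> 'm)" where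
  "e0 = tens (mat 1) (mat 1)"

definition K0 :: "(complex^'m::finite^'m \<Rightarrow> complex^'m^'m) set \<Rightarrow> (complex^('n::finite \<times> 'm)^('n \<times> 'm)) set" where
  "K0 C = {x. \<forall>\<alpha>\<in>C. psd (id_tens \<alpha> x)}"

definition OU :: "(complex^'m::finite^'m \<Rightarrow> complex^'m^'m) set \<Rightarrow> complex^('n::finite \<times> 'm)^('n \<times> 'm) \<Rightarrow> bool" where
  "OU C x \<longleftrightarrow> (\<exists>t. x + t *\<^sub>R e0 \<in> K0 C \<and> - x + t *\<^sub>R e0 \<in> K0 C)"

lemma Dg_UNIV: "Dg UNIV = mat 1"
  by (simp add: Dg_def mat_def)

lemma shift_id:
  "tens P Z + (l * s) *\<^sub>R e0 = tens P (Z + s *\<^sub>R mat 1) + tens (l *\<^sub>R mat 1 - P) (s *\<^sub>R mat 1)"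
proof -
  have "(tens P Z + (l * s) *\<^sub>R e0) $ p $ q = (tens P (Z + s *\<^sub>R mat 1) + tens (l *\<^sub>R mat 1 - P) (s *\<^sub>R mat 1)) $ p $ q" for p q
  proof -
    have "(tens P Z + (l * s) *\<^sub>R e0) $ p $ q = P $ fst p $ fst q * Z $ snd p $ snd q
        + of_real (l * s) * ((if fst p = fst q then 1 else 0) * (if snd p = snd q then 1 else 0))"
      by (simp add: tens_def e0_def scaleR_entry mat_def del: vector_scaleR_component)
    moreover have "(tens P (Z + s *\<^sub>R mat 1) + tens (l *\<^sub>R mat 1 - P) (s *\<^sub>R mat 1)) $ p $ q
        = P $ fst p $ fst q * (Z $ snd p $ snd q + of_real s * (if snd p = snd q then 1 else 0))
          + (of_real l * (if fst p = fst q then 1 else 0) - P $ fst p $ fst q) * (of_real s * (if snd p = snd q then 1 else 0))"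
      by (simp add: tens_def scaleR_entry mat_def del: vector_scaleR_component)
    ultimately show ?thesis by (simp add: algebra_simps)
  qed
  then show ?thesis by (simp add: vec_eq_iff)
qed

context
  fixes C :: "(complex^'m::finite^'m \<Rightarrow> complex^'m^'m) set"
  assumes pos: "\<forall>\<alpha>\<in>C. positive_map \<alpha>"
begin

lemma clmC: "\<alpha> \<in> C \<Longrightarrow> complex_linear_map \<alpha>"
  using pos positive_map_def by blast

lemma K0_add: "x \<in> K0 C \<Longrightarrow> y \<in> K0 C \<Longrightarrow> x + y \<in> K0 C"
  unfolding K0_def by (auto simp: id_tens_add clmC intro: psd_add)

lemma K0_scaleR: "x \<in> K0 C \<Longrightarrow> r \<ge> 0 \<Longrightarrow> r *\<^sub>R x \<in> K0 C"
  unfolding K0_def by (auto simp: id_tens_scaleR clmC intro: psd_scaleR)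

lemma K0_zero: "0 \<in> K0 C"
  unfolding K0_def by (auto simp: id_tens_zero clmC intro: psd_zero)

lemma K0_tens:
  fixes P :: "complex^'n::finite^'n"
  assumes "Tc P TYPE(complex^'m^'m)" "psd Q"
  shows "tens P Q \<in> K0 C"
  unfolding K0_def
proof
  show "\<forall>\<alpha>\<in>C. psd (id_tens \<alpha> (tens P Q))"
  proof
    fix \<alpha> assume a: "\<alpha> \<in> C"
    then have "psd (\<alpha> Q)" using pos assms(2) positive_map_def by blast
    then show "psd (id_tens \<alpha> (tens P Q))"
      using assms(1) unfolding id_tens_tens[OF clmC[OF a]] Tc_def by blast
  qed
qed

lemma e0_K0: "(e0 :: complex^('n::finite \<times> 'm)^('n \<times> 'm)) \<in> K0 C"
  unfolding e0_def Dg_UNIV[symmetric] by (rule K0_tens[OF Tc_Dg]) (simp add: Dg_UNIV psd_one)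

lemma OU_add: "OU C x \<Longrightarrow> OU C y \<Longrightarrow> OU C (x + y)"
proof -
  assume "OU C x" "OU C y"
  then obtain t1 t2 where "x + t1 *\<^sub>R e0 \<in> K0 C" "- x + t1 *\<^sub>R e0 \<in> K0 C"
    "y + t2 *\<^sub>R e0 \<in> K0 C" "- y + t2 *\<^sub>R e0 \<in> K0 C" unfolding OU_def by blast
  then have "(x + t1 *\<^sub>R e0) + (y + t2 *\<^sub>R e0) \<in> K0 C" "(- x + t1 *\<^sub>R e0) + (- y + t2 *\<^sub>R e0) \<in> K0 C"
    by (auto intro: K0_add)
  then have "(x + y) + (t1 + t2) *\<^sub>R e0 \<in> K0 C \<and> - (x + y) + (t1 + t2) *\<^sub>R e0 \<in> K0 C"
    by (simp add: algebra_simps)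
  then show ?thesis unfolding OU_def by blast
qed

lemma OU_scaleR: "OU C x \<Longrightarrow> OU C (r *\<^sub>R x)"
proof -
  assume "OU C x"
  then obtain t where t: "x + t *\<^sub>R e0 \<in> K0 C" "- x + t *\<^sub>R e0 \<in> K0 C" unfolding OU_def by blast
  show ?thesis
  proof (cases "r \<ge> 0")
    case True
    have "r *\<^sub>R (x + t *\<^sub>R e0) \<in> K0 C" "r *\<^sub>R (- x + t *\<^sub>R e0) \<in> K0 C"
      using t True by (auto intro: K0_scaleR)
    then have "r *\<^sub>R x + (r * t) *\<^sub>R e0 \<in> K0 C \<and> - (r *\<^sub>R x) + (r * t) *\<^sub>R e0 \<in> K0 C"
      by (simp add: algebra_simps)
    then show ?thesis unfolding OU_def by blast
  next
    case False
    have "(- r) *\<^sub>R (x + t *\<^sub>R e0) \<in> K0 C" "(- r) *\<^sub>R (- x + t *\<^sub>R e0) \<in> K0 C"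
      using False by (intro K0_scaleR t; simp)+
    then have "r *\<^sub>R x + (- r * t) *\<^sub>R e0 \<in> K0 C \<and> - (r *\<^sub>R x) + (- r * t) *\<^sub>R e0 \<in> K0 C"
      by (simp add: algebra_simps)
    then show ?thesis unfolding OU_def by blast
  qed
qed

lemma OU_zero: "OU C 0"
  unfolding OU_def using K0_zero by (intro exI[of _ 0]) simp

lemma OU_uminus: "OU C x \<Longrightarrow> OU C (- x)"
  using OU_scaleR[of x "-1"] by simp

lemma OU_diff: "OU C x \<Longrightarrow> OU C y \<Longrightarrow> OU C (x - y)"
  using OU_add[of x "- y"] OU_uminus[of y] by simp

lemma OU_sum: "(\<And>i. i \<in> S \<Longrightarrow> OU C (f i)) \<Longrightarrow> OU C (\<Sum>i\<in>S. f i)"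
proof (induction S rule: infinite_finite_induct)
  case (infinite S) then show ?case by (simp add: OU_zero)
next
  case empty then show ?case by (simp add: OU_zero)
next
  case (insert x F) then show ?case by (simp add: OU_add)
qed

lemma OU_gen:
  fixes P :: "complex^'n::finite^'n" and Z :: "complex^'m^'m"
  assumes "Fam P TYPE(complex^'m^'m)" "mat_adj Z = Z"
  shows "OU C (tens P Z)"
proof -
  obtain l where l: "l \<ge> 0" "Tc (l *\<^sub>R mat 1 - P) TYPE(complex^'m^'m)" and TP: "Tc P TYPE(complex^'m^'m)"
    using assms(1) unfolding Fam_def by blast
  define s where "s = hs Z"
  have s0: "s \<ge> 0" unfolding s_def by (rule hs_nonneg)
  have p1: "psd (Z + s *\<^sub>R mat 1)" unfolding s_def by (rule herm_shift[OF assms(2)])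
  have adjm: "mat_adj (- Z) = - Z" using assms(2) by (simp add: mat_adj_uminus)
  have p2: "psd (- Z + s *\<^sub>R mat 1)" unfolding s_def using herm_shift[OF adjm] by (simp add: hs_uminus)
  have ps: "psd (s *\<^sub>R mat 1)" using s0 psd_one by (rule psd_scaleR[rotated])
  have k2: "tens (l *\<^sub>R mat 1 - P) (s *\<^sub>R mat 1) \<in> K0 C" by (rule K0_tens[OF l(2) ps])
  have "tens P Z + (l * s) *\<^sub>R e0 \<in> K0 C"
    unfolding shift_id by (rule K0_add[OF K0_tens[OF TP p1] k2])
  moreover have "- tens P Z + (l * s) *\<^sub>R e0 \<in> K0 C"
  proof -
    have eq: "- tens P Z = tens P (- Z)" by (simp add: tens_def vec_eq_iff)
    have "tens P (- Z) + (l * s) *\<^sub>R e0 \<in> K0 C"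
      unfolding shift_id by (rule K0_add[OF K0_tens[OF TP p2] k2])
    then show ?thesis by (simp only: eq)
  qed
  ultimately show ?thesis unfolding OU_def by blast
qed

end


definition Eij :: "'k::finite \<Rightarrow> 'k \<Rightarrow> complex^'k^'k" where
  "Eij i j = (\<chi> a b. if a = i \<and> b = j then 1 else 0)"

lemma decomp: "x = (\<Sum>i\<in>UNIV. \<Sum>j\<in>UNIV. tens (Eij i j) (blk x i j))"
proof -
  have "(\<Sum>i\<in>UNIV. \<Sum>j\<in>UNIV. tens (Eij i j) (blk x i j)) $ p $ q = x $ p $ q" for p q
  proof -
    obtain a k where p: "p = (a,k)" by (cases p)
    obtain b l where q: "q = (b,l)" by (cases q)
    have t: "tens (Eij i j) (blk x i j) $ p $ q = (if i = a then (if j = b then x $ (a,k) $ (b,l) else 0) else 0)" for i j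
      by (auto simp: tens_def Eij_def blk_def p q)
    have "(\<Sum>i\<in>UNIV. \<Sum>j\<in>UNIV. tens (Eij i j) (blk x i j)) $ p $ q = (\<Sum>i\<in>UNIV. \<Sum>j\<in>UNIV. tens (Eij i j) (blk x i j) $ p $ q)"
      by (simp only: sum_component)
    also have "\<dots> = (\<Sum>i\<in>UNIV. if i = a then (\<Sum>j\<in>UNIV. if j = b then x $ (a,k) $ (b,l) else 0) else 0)"
      unfolding t by (rule sum.cong[OF refl]) simp
    also have "\<dots> = x $ p $ q"
      by (simp add: p q)
    finally show ?thesis .
  qed
  then show ?thesis by (simp add: vec_eq_iff)
qed

lemma mat_adj_sum: "mat_adj (\<Sum>i\<in>S. f i) = (\<Sum>i\<in>S. mat_adj (f i))"
  by (induction S rule: infinite_finite_induct) (simp_all add: mat_adj_add)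

lemma adj_Eij: "mat_adj (Eij i j) = Eij j i"
  by (auto simp: mat_adj_def Eij_def vec_eq_iff)

lemma adj_blk: "mat_adj (blk x i j) = blk (mat_adj x) j i"
  by (simp add: mat_adj_def blk_def vec_eq_iff)

lemma sa_decomp:
  assumes "mat_adj x = x"
  shows "x = (\<Sum>i\<in>UNIV. \<Sum>j\<in>UNIV. (1/2) *\<^sub>R (tens (Eij i j) (blk x i j) + tens (Eij j i) (mat_adj (blk x i j))))"
proof -
  have "mat_adj (\<Sum>i\<in>UNIV. \<Sum>j\<in>UNIV. tens (Eij i j) (blk x i j)) = (\<Sum>i\<in>UNIV. \<Sum>j\<in>UNIV. tens (Eij j i) (mat_adj (blk x i j)))"
    by (simp add: mat_adj_sum mat_adj_tens adj_Eij)
  then have a: "mat_adj x = (\<Sum>i\<in>UNIV. \<Sum>j\<in>UNIV. tens (Eij j i) (mat_adj (blk x i j)))"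
    by (simp only: decomp[symmetric])
  have "(\<Sum>i\<in>UNIV. \<Sum>j\<in>UNIV. (1/2) *\<^sub>R (tens (Eij i j) (blk x i j) + tens (Eij j i) (mat_adj (blk x i j))))
      = (1/2) *\<^sub>R (\<Sum>i\<in>UNIV. \<Sum>j\<in>UNIV. tens (Eij i j) (blk x i j)) + (1/2) *\<^sub>R (\<Sum>i\<in>UNIV. \<Sum>j\<in>UNIV. tens (Eij j i) (mat_adj (blk x i j)))"
    by (simp add: scaleR_add_right sum.distrib scaleR_sum_right)
  also have "\<dots> = (1/2) *\<^sub>R x + (1/2) *\<^sub>R mat_adj x"
    by (simp only: decomp[symmetric] a[symmetric])
  also have "\<dots> = ((1/2) + (1/2)) *\<^sub>R x" using assms by (simp only: scaleR_add_left)
  also have "\<dots> = x" by simp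
  finally show ?thesis by (rule sym)
qed

lemma Eii_outer: "Eij i i = outer (ev i) (ev i)"
  by (simp add: Eij_def outer_ev vec_eq_iff)

lemma tens_entry: "tens P Z $ (a,k) $ (b,l) = P $ a $ b * Z $ k $ l"
  by (simp add: tens_def)
lemma cscale_entry: "cscale c Y $ k $ l = c * Y $ k $ l"
  by (simp add: cscale_def)
lemma mat_adj_entry: "mat_adj Y $ k $ l = cnj (Y $ l $ k)"
  by (simp add: mat_adj_def)
lemma add_entry: "(x + y) $ k $ l = x $ k $ l + y $ k $ l"
  by simp
lemma minus_entry: "(x - y) $ k $ l = x $ k $ l - y $ k $ l"
  by simp

lemma offdiag_id:
  fixes Y :: "complex^'m::finite^'m" and i j :: "'n::finite"
  assumes ij: "i \<noteq> j"
  shows "tens (Eij i j) Y + tens (Eij j i) (mat_adj Y) =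
    (1/2) *\<^sub>R (tens (outer (pv i j 1) (pv i j 1)) (Y + mat_adj Y) - tens (outer (ev i) (ev i)) (Y + mat_adj Y)
       - tens (outer (ev j) (ev j)) (Y + mat_adj Y) + tens (outer (ev i) (ev i)) (cscale (- \<i>) (Y - mat_adj Y))
       + tens (outer (ev j) (ev j)) (cscale (- \<i>) (Y - mat_adj Y)) - tens (outer (pv i j \<i>) (pv i j \<i>)) (cscale (- \<i>) (Y - mat_adj Y)))"
    (is "?L = ?R")
proof -
  have "?L $ (a,k) $ (b,l) = ?R $ (a,k) $ (b,l)" for a k b l
  proof -
    define y1 where "y1 = Y $ k $ l"
    define y2 where "y2 = cnj (Y $ l $ k)"
    define f1 where "f1 = outer (pv i j 1) (pv i j 1) $ a $ b"
    define f2 where "f2 = outer (pv i j \<i>) (pv i j \<i>) $ a $ b"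
    define ei where "ei = outer (ev i) (ev i) $ a $ b"
    define ej where "ej = outer (ev j) (ev j) $ a $ b"
    have L: "?L $ (a,k) $ (b,l) = Eij i j $ a $ b * y1 + Eij j i $ a $ b * y2"
      by (simp only: add_entry tens_entry mat_adj_entry y1_def y2_def)
    have R: "?R $ (a,k) $ (b,l) = complex_of_real (1/2) * (f1 * (y1 + y2) - ei * (y1 + y2) - ej * (y1 + y2)
        + ei * (- \<i> * (y1 - y2)) + ej * (- \<i> * (y1 - y2)) - f2 * (- \<i> * (y1 - y2)))"
      by (simp only: add_entry minus_entry tens_entry mat_adj_entry cscale_entry scaleR_entry
          y1_def y2_def f1_def f2_def ei_def ej_def)
    have "Eij i j $ a $ b * y1 + Eij j i $ a $ b * y2 = complex_of_real (1/2) * (f1 * (y1 + y2) - ei * (y1 + y2) - ej * (y1 + y2)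
        + ei * (- \<i> * (y1 - y2)) + ej * (- \<i> * (y1 - y2)) - f2 * (- \<i> * (y1 - y2)))"
    proof (cases "a = i")
      case True
      then show ?thesis using ij
        by (cases "b = i"; cases "b = j") (simp_all add: f1_def f2_def ei_def ej_def outer_def pv_def ev_def Eij_def algebra_simps)
    next
      case False
      then show ?thesis using ij
        by (cases "a = j"; cases "b = i"; cases "b = j") (simp_all add: f1_def f2_def ei_def ej_def outer_def pv_def ev_def Eij_def algebra_simps)
    qed
    then show ?thesis by (rule trans[OF L trans[OF _ R[symmetric]]])
  qed
  then have all: "?L $ p $ q = ?R $ p $ q" for p q
  proof -
    assume h: "\<And>a k b l. ?L $ (a,k) $ (b,l) = ?R $ (a,k) $ (b,l)"
    obtain a k where p: "p = (a,k)" by (cases p)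
    obtain b l where q: "q = (b,l)" by (cases q)
    show ?thesis unfolding p q by (rule h)
  qed
  show ?thesis by (simp only: vec_eq_iff all) simp
qed


context
  fixes C :: "(complex^'m::finite^'m \<Rightarrow> complex^'m^'m) set"
  assumes pos: "\<forall>\<alpha>\<in>C. positive_map \<alpha>"
begin

lemma OU_G:
  fixes Y :: "complex^'m^'m" and i j :: "'n::finite"
  shows "OU C ((1/2) *\<^sub>R (tens (Eij i j) Y + tens (Eij j i) (mat_adj Y)))"
proof -
  have sa1: "mat_adj (Y + mat_adj Y) = Y + mat_adj Y" by (simp add: mat_adj_add add.commute)
  show ?thesis
  proof (cases "i = j")
    case True
    have "tens (Eij i j) Y + tens (Eij j i) (mat_adj Y) = tens (outer (ev i) (ev i)) (Y + mat_adj Y)"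
      using True by (simp add: tens_add2 Eii_outer)
    moreover have "OU C (tens (outer (ev i) (ev i)) (Y + mat_adj Y))"
      by (rule OU_gen[OF pos Fam_ev sa1])
    ultimately show ?thesis by (simp add: OU_scaleR[OF pos])
  next
    case False
    have sa2: "mat_adj (cscale (- \<i>) (Y - mat_adj Y)) = cscale (- \<i>) (Y - mat_adj Y)"
      by (simp add: mat_adj_def cscale_def vec_eq_iff algebra_simps)
    have f1: "Fam (outer (pv i j 1) (pv i j 1)) TYPE(complex^'m^'m)"
      by (rule Fam_pv[OF False]) simp
    have f2: "Fam (outer (pv i j \<i>) (pv i j \<i>)) TYPE(complex^'m^'m)"
      by (rule Fam_pv[OF False]) simp
    have ei: "Fam (outer (ev i) (ev i)) TYPE(complex^'m^'m)" "Fam (outer (ev j) (ev j)) TYPE(complex^'m^'m)"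
      by (rule Fam_ev)+
    note g = OU_gen[OF pos f1 sa1] OU_gen[OF pos ei(1) sa1] OU_gen[OF pos ei(2) sa1]
      OU_gen[OF pos ei(1) sa2] OU_gen[OF pos ei(2) sa2] OU_gen[OF pos f2 sa2]
    have "OU C (tens (Eij i j) Y + tens (Eij j i) (mat_adj Y))"
      unfolding offdiag_id[OF False]
      by (intro OU_scaleR[OF pos] OU_add[OF pos] OU_diff[OF pos] g)
    then show ?thesis by (rule OU_scaleR[OF pos])
  qed
qed

lemma order_unit:
  fixes x :: "complex^('n::finite \<times> 'm)^('n \<times> 'm)"
  assumes "mat_adj x = x"
  shows "OU C x"
proof -
  have H: "OU C (\<Sum>i\<in>UNIV. \<Sum>j\<in>UNIV. (1/2) *\<^sub>R (tens (Eij i j) (blk x i j) + tens (Eij j i) (mat_adj (blk x i j))))"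
    by (intro OU_sum[OF pos] OU_G)
  from H show ?thesis by (simp only: sa_decomp[OF assms, symmetric])
qed

end


definition rmat :: "((complex^'n::finite^'n) \<times> (complex^'m::finite^'m)) list \<Rightarrow> complex^('n \<times> 'm)^('n \<times> 'm)" where
  "rmat ps = sum_list (map (\<lambda>(a,b). tens a b) ps)"

definition rval :: "(complex^'n::finite^'n \<Rightarrow> complex^'m::finite^'m) \<Rightarrow> ((complex^'n^'n) \<times> (complex^'m^'m)) list \<Rightarrow> complex" where
  "rval \<phi> ps = sum_list (map (\<lambda>(a,b). trace (\<phi> a ** transpose b)) ps)"

lemma sum_list_map_upt: "sum_list (map f [0..<N]) = (\<Sum>i<N. f i)"
  by (simp only: interv_sum_list_conv_sum_set_nat set_upt atLeast0LessThan)

lemma sum_list_map_nth: "sum_list (map f xs) = (\<Sum>i<length xs. f (xs ! i))"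
proof -
  have "map f xs = map (\<lambda>i. f (xs ! i)) [0..<length xs]"
    by (rule nth_equalityI) simp_all
  then have "sum_list (map f xs) = sum_list (map (\<lambda>i. f (xs ! i)) [0..<length xs])"
    by (rule arg_cong)
  also have "\<dots> = (\<Sum>i<length xs. f (xs ! i))" by (rule sum_list_map_upt)
  finally show ?thesis .
qed

lemma dual_value_iff:
  fixes \<phi> :: "complex^'n::finite^'n \<Rightarrow> complex^'m::finite^'m"
  shows "dual_value A \<phi> x c \<longleftrightarrow> (\<exists>ps. (\<forall>p\<in>set ps. fst p \<in> A) \<and> x = rmat ps \<and> c = rval \<phi> ps)"
proof
  assume "dual_value A \<phi> x c"
  then obtain N a and b :: "nat \<Rightarrow> complex^'m^'m" where h: "\<forall>i<N. a i \<in> A" "x = (\<Sum>i<N. tens (a i) (b i))"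
    "c = (\<Sum>i<N. trace (\<phi> (a i) ** transpose (b i)))" unfolding dual_value_def by blast
  define ps where "ps = map (\<lambda>i. (a i, b i)) [0..<N]"
  have "\<forall>p\<in>set ps. fst p \<in> A" using h(1) by (auto simp: ps_def)
  moreover have "x = rmat ps" unfolding rmat_def ps_def h(2) by (simp add: sum_list_map_upt comp_def)
  moreover have "c = rval \<phi> ps" unfolding rval_def ps_def h(3) by (simp add: sum_list_map_upt comp_def)
  ultimately show "\<exists>ps. (\<forall>p\<in>set ps. fst p \<in> A) \<and> x = rmat ps \<and> c = rval \<phi> ps" by blast
next
  assume "\<exists>ps. (\<forall>p\<in>set ps. fst p \<in> A) \<and> x = rmat ps \<and> c = rval \<phi> ps"
  then obtain ps where h: "\<forall>p\<in>set ps. fst p \<in> A" "x = rmat ps" "c = rval \<phi> ps" by blast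
  define a where "a i = fst (ps ! i)" for i
  define b where "b i = snd (ps ! i)" for i
  have "\<forall>i<length ps. a i \<in> A" using h(1) by (auto simp: a_def)
  moreover have "x = (\<Sum>i<length ps. tens (a i) (b i))"
    unfolding h(2) rmat_def sum_list_map_nth a_def b_def by (simp add: case_prod_beta)
  moreover have "c = (\<Sum>i<length ps. trace (\<phi> (a i) ** transpose (b i)))"
    unfolding h(3) rval_def sum_list_map_nth a_def b_def by (simp add: case_prod_beta)
  ultimately show "dual_value A \<phi> x c" unfolding dual_value_def by blast
qed

lemma rmat_append: "rmat (ps @ qs) = rmat ps + rmat qs"
  by (simp add: rmat_def)
lemma rval_append: "rval \<phi> (ps @ qs) = rval \<phi> ps + rval \<phi> qs"
  by (simp add: rval_def)

lemma trace_cscale: "trace (M ** transpose (cscale c b)) = c * trace (M ** transpose b)"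
  by (simp add: trace_def matrix_matrix_mult_def transpose_def cscale_def sum_distrib_left mult_ac)

lemma rmat_cscale: "rmat (map (\<lambda>(a,b). (a, cscale c b)) ps) = cscale c (rmat ps)"
  by (induction ps) (auto simp: rmat_def tens_cscale2 cscale_add)

lemma rval_cscale: "rval \<phi> (map (\<lambda>(a,b). (a, cscale c b)) ps) = c * rval \<phi> ps"
  by (induction ps) (auto simp: rval_def trace_cscale distrib_left)

lemma dv_add: "dual_value A \<phi> x c \<Longrightarrow> dual_value A \<phi> y d \<Longrightarrow> dual_value A \<phi> (x + y) (c + d)"
  unfolding dual_value_iff
proof (elim exE conjE)
  fix ps qs assume "\<forall>p\<in>set ps. fst p \<in> A" "x = rmat ps" "c = rval \<phi> ps"
    "\<forall>p\<in>set qs. fst p \<in> A" "y = rmat qs" "d = rval \<phi> qs"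
  then show "\<exists>ps. (\<forall>p\<in>set ps. fst p \<in> A) \<and> x + y = rmat ps \<and> c + d = rval \<phi> ps"
    by (intro exI[of _ "ps @ qs"]) (auto simp: rmat_append rval_append)
qed

lemma dv_cscale: "dual_value A \<phi> x c \<Longrightarrow> dual_value A \<phi> (cscale d x) (d * c)"
  unfolding dual_value_iff
proof (elim exE conjE)
  fix ps assume "\<forall>p\<in>set ps. fst p \<in> A" "x = rmat ps" "c = rval \<phi> ps"
  then show "\<exists>ps. (\<forall>p\<in>set ps. fst p \<in> A) \<and> cscale d x = rmat ps \<and> d * c = rval \<phi> ps"
    by (intro exI[of _ "map (\<lambda>(a,b). (a, cscale d b)) ps"]) (auto simp: rmat_cscale rval_cscale)
qed

lemma dv_nil: "dual_value A \<phi> 0 0"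
  unfolding dual_value_iff by (intro exI[of _ "[]"]) (simp add: rmat_def rval_def)

lemma dv_single: "a \<in> A \<Longrightarrow> dual_value A \<phi> (tens a b) (trace (\<phi> a ** transpose b))"
  unfolding dual_value_iff by (intro exI[of _ "[(a,b)]"]) (simp add: rmat_def rval_def)

lemma tens_space_iff:
  "x \<in> tens_space A \<longleftrightarrow> (\<exists>ps. (\<forall>p\<in>set ps. fst p \<in> A) \<and> x = rmat ps)"
proof
  assume "x \<in> tens_space A"
  then show "\<exists>ps. (\<forall>p\<in>set ps. fst p \<in> A) \<and> x = rmat ps"
    unfolding tens_space_def
  proof (induction rule: real_vector.span_induct_alt)
    case base
    show ?case by (intro exI[of _ "[]"]) (simp add: rmat_def)
  next
    case (step c s y)
    then obtain a b where s: "s = tens a b" "a \<in> A" by blast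
    from step obtain ps where ps: "\<forall>p\<in>set ps. fst p \<in> A" "y = rmat ps" by blast
    show ?case
      by (intro exI[of _ "(a, c *\<^sub>R b) # ps"]) (simp add: rmat_def s ps tens_scaleR2)
  qed
next
  assume "\<exists>ps. (\<forall>p\<in>set ps. fst p \<in> A) \<and> x = rmat ps"
  then obtain ps where ps: "\<forall>p\<in>set ps. fst p \<in> A" "x = rmat ps" by blast
  have "rmat ps \<in> tens_space A" using ps(1)
  proof (induction ps)
    case Nil then show ?case by (simp add: rmat_def tens_space_def real_vector.span_zero)
  next
    case (Cons p ps)
    obtain a b where p: "p = (a,b)" by (cases p)
    have "tens a b \<in> tens_space A" unfolding tens_space_def
      using Cons.prems p by (intro real_vector.span_base) auto
    then show ?case using Cons p unfolding tens_space_def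
      by (simp add: rmat_def real_vector.span_add)
  qed
  then show "x \<in> tens_space A" using ps(2) by simp
qed

lemma tens_space_dv: "x \<in> tens_space A \<Longrightarrow> \<exists>c. dual_value A \<phi> x c"
  unfolding tens_space_iff dual_value_iff by blast

lemma V_add: "x \<in> tens_space A \<Longrightarrow> y \<in> tens_space A \<Longrightarrow> x + y \<in> tens_space A"
  unfolding tens_space_def by (rule real_vector.span_add)
lemma V_scaleR: "x \<in> tens_space A \<Longrightarrow> r *\<^sub>R x \<in> tens_space A"
  unfolding tens_space_def by (rule real_vector.span_scale)
lemma V_zero: "0 \<in> tens_space A"
  unfolding tens_space_def by (rule real_vector.span_zero)
lemma V_tens: "a \<in> A \<Longrightarrow> tens a b \<in> tens_space A"
  unfolding tens_space_def by (rule real_vector.span_base) blast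
lemma V_cscale: "x \<in> tens_space A \<Longrightarrow> cscale c x \<in> tens_space A"
proof -
  assume "x \<in> tens_space A"
  then obtain ps where ps: "\<forall>p\<in>set ps. fst p \<in> A" "x = rmat ps" using tens_space_iff by blast
  have "cscale c x = rmat (map (\<lambda>(a,b). (a, cscale c b)) ps)" by (simp add: ps(2) rmat_cscale)
  moreover have "\<forall>p\<in>set (map (\<lambda>(a,b). (a, cscale c b)) ps). fst p \<in> A" using ps(1) by auto
  ultimately show ?thesis unfolding tens_space_iff by blast
qed
lemma V_diff: "x \<in> tens_space A \<Longrightarrow> y \<in> tens_space A \<Longrightarrow> x - y \<in> tens_space A"
  unfolding tens_space_def by (rule real_vector.span_diff)

lemma rmat_adj: "(\<forall>p\<in>set ps. mat_adj (fst p) = fst p) \<Longrightarrow> mat_adj (rmat ps) = rmat (map (\<lambda>(a,b). (a, mat_adj b)) ps)"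
  by (induction ps) (auto simp: rmat_def mat_adj_add mat_adj_tens)

lemma V_adj:
  assumes "\<forall>a\<in>A. mat_adj a = a" "x \<in> tens_space A"
  shows "mat_adj x \<in> tens_space A"
proof -
  obtain ps where ps: "\<forall>p\<in>set ps. fst p \<in> A" "x = rmat ps" using assms(2) tens_space_iff by blast
  have "mat_adj x = rmat (map (\<lambda>(a,b). (a, mat_adj b)) ps)"
    unfolding ps(2) using ps(1) assms(1) by (intro rmat_adj) auto
  moreover have "\<forall>p\<in>set (map (\<lambda>(a,b). (a, mat_adj b)) ps). fst p \<in> A" using ps(1) by auto
  ultimately show ?thesis unfolding tens_space_iff by blast
qed


definition Hm :: "complex^'k::finite^'k \<Rightarrow> complex^'k^'k" where
  "Hm z = (1/2) *\<^sub>R (z + mat_adj z)"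

definition Hs :: "complex^'k::finite^'k \<Rightarrow> complex^'k^'k" where
  "Hs z = Hm (cscale (- \<i>) z)"

lemma Hm_add: "Hm (x + y) = Hm x + Hm y"
  by (simp add: Hm_def mat_adj_add algebra_simps)
lemma Hm_scaleR: "Hm (r *\<^sub>R x) = r *\<^sub>R Hm x"
  by (simp add: Hm_def mat_adj_scaleR scaleR_add_right)
lemma Hm_sa: "mat_adj z = z \<Longrightarrow> Hm z = z"
  by (simp add: Hm_def flip: scaleR_2)
lemma Hm_adj: "mat_adj (Hm z) = Hm z"
  by (simp add: Hm_def mat_adj_scaleR mat_adj_add add.commute)
lemma cscale_scaleR: "cscale c (r *\<^sub>R x) = r *\<^sub>R cscale c x"
  unfolding cscale_def vec_eq_iff by (simp add: scaleR_entry del: vector_scaleR_component)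
lemma cscale_zero_left: "cscale 0 x = 0"
  by (simp add: cscale_def vec_eq_iff)
lemma Hs_add: "Hs (x + y) = Hs x + Hs y"
  by (simp add: Hs_def cscale_add Hm_add)
lemma Hs_scaleR: "Hs (r *\<^sub>R x) = r *\<^sub>R Hs x"
  by (simp add: Hs_def cscale_scaleR Hm_scaleR)
lemma Hs_sa0: "mat_adj z = z \<Longrightarrow> Hs z = 0"
proof -
  assume a: "mat_adj z = z"
  have "cscale (- \<i>) z + mat_adj (cscale (- \<i>) z) = cscale (- \<i>) z + cscale \<i> z"
    by (simp add: mat_adj_cscale a)
  also have "\<dots> = cscale (- \<i> + \<i>) z" by (rule cscale_addc[symmetric])
  finally have "cscale (- \<i>) z + mat_adj (cscale (- \<i>) z) = cscale (- \<i> + \<i>) z" .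
  then show ?thesis by (simp add: Hs_def Hm_def cscale_zero_left)
qed
lemma Hm_uminus: "Hm (- x) = - Hm x"
  using Hm_scaleR[of "-1" x] by simp
lemma cscale_uminus: "cscale (- c) x = - cscale c x"
  by (simp add: cscale_def vec_eq_iff)
lemma Hm_i: "Hm (cscale \<i> z) = - Hs z"
  unfolding Hs_def cscale_uminus Hm_uminus by simp
lemma Hs_i: "Hs (cscale \<i> z) = Hm z"
  by (simp add: Hs_def cscale_cscale)
lemma HmHs: "Hm z + cscale \<i> (Hs z) = z"
proof -
  have "(Hm z + cscale \<i> (Hs z)) $ k $ l = z $ k $ l" for k l
  proof -
    have "(Hm z + cscale \<i> (Hs z)) $ k $ l = complex_of_real (1/2) * (z $ k $ l + cnj (z $ l $ k))
       + \<i> * (complex_of_real (1/2) * (- \<i> * z $ k $ l + cnj (- \<i> * z $ l $ k)))"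
      by (simp only: Hs_def Hm_def add_entry scaleR_entry cscale_entry mat_adj_entry)
    also have "\<dots> = z $ k $ l"
      by (simp add: complex_eq_iff algebra_simps)
    finally show ?thesis .
  qed
  then show ?thesis by (simp add: vec_eq_iff)
qed
lemma cscale_real_imag: "cscale c z = Re c *\<^sub>R z + Im c *\<^sub>R cscale \<i> z"
proof -
  have "cscale c z $ k $ l = (Re c *\<^sub>R z + Im c *\<^sub>R cscale \<i> z) $ k $ l" for k l
  proof -
    have "(Re c *\<^sub>R z + Im c *\<^sub>R cscale \<i> z) $ k $ l = complex_of_real (Re c) * z $ k $ l + complex_of_real (Im c) * (\<i> * z $ k $ l)"
      by (simp only: add_entry scaleR_entry cscale_entry)
    also have "\<dots> = c * z $ k $ l"
      by (simp add: complex_eq_iff algebra_simps)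
    finally show ?thesis by (simp add: cscale_entry)
  qed
  then show ?thesis by (simp add: vec_eq_iff)
qed

lemma trace_mult_transpose: "trace (M ** transpose b) = (\<Sum>k\<in>UNIV. \<Sum>l\<in>UNIV. M $ k $ l * b $ k $ l)"
  by (simp add: trace_def matrix_matrix_mult_def transpose_def)

lemma trace_Eij: "trace (M ** transpose (Eij k l)) = M $ k $ l"
proof -
  have e: "M $ a $ b * Eij k l $ a $ b = (if a = k then (if b = l then M $ k $ l else 0) else 0)" for a b
    by (simp add: Eij_def)
  have "trace (M ** transpose (Eij k l)) = (\<Sum>a\<in>UNIV. if a = k then (\<Sum>b\<in>UNIV. if b = l then M $ k $ l else 0) else 0)"
    unfolding trace_mult_transpose e by (rule sum.cong[OF refl]) simp
  then show ?thesis by simp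
qed

lemma tens_expand: "tens a b = (\<Sum>k\<in>UNIV. \<Sum>l\<in>UNIV. cscale (b $ k $ l) (tens a (Eij k l)))"
proof -
  have "(\<Sum>k\<in>UNIV. \<Sum>l\<in>UNIV. cscale (b $ k $ l) (tens a (Eij k l))) $ p $ q = tens a b $ p $ q" for p q
  proof -
    obtain i r where p: "p = (i,r)" by (cases p)
    obtain j s where q: "q = (j,s)" by (cases q)
    have t: "cscale (b $ k $ l) (tens a (Eij k l)) $ p $ q = (if k = r then (if l = s then a $ i $ j * b $ r $ s else 0) else 0)" for k l
      by (auto simp: cscale_def tens_def Eij_def p q)
    have "(\<Sum>k\<in>UNIV. \<Sum>l\<in>UNIV. cscale (b $ k $ l) (tens a (Eij k l))) $ p $ q = (\<Sum>k\<in>UNIV. \<Sum>l\<in>UNIV. cscale (b $ k $ l) (tens a (Eij k l)) $ p $ q)"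
      by (simp only: sum_component)
    also have "\<dots> = (\<Sum>k\<in>UNIV. if k = r then (\<Sum>l\<in>UNIV. if l = s then a $ i $ j * b $ r $ s else 0) else 0)"
      unfolding t by (rule sum.cong[OF refl]) simp
    also have "\<dots> = tens a b $ p $ q"
      by (simp add: p q tens_def)
    finally show ?thesis .
  qed
  then show ?thesis by (simp add: vec_eq_iff)
qed

lemma lim0:
  fixes c d :: real
  assumes "\<And>t. t > 0 \<Longrightarrow> 0 \<le> c + t * d"
  shows "0 \<le> d"
proof (rule ccontr)
  assume "\<not> 0 \<le> d"
  then have d: "d < 0" by simp
  define t where "t = (\<bar>c\<bar> + 1) / (- d)"
  have t0: "t > 0" unfolding t_def using d by (intro divide_pos_pos) auto
  have "t * d = - (\<bar>c\<bar> + 1)" unfolding t_def using d by (simp add: field_simps)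
  then have "c + t * d < 0" by linarith
  with assms[OF t0] show False by linarith
qed

definition Fv :: "(complex^'n::finite^'n) set \<Rightarrow> (complex^'n^'n \<Rightarrow> complex^'m::finite^'m) \<Rightarrow> complex^('n \<times> 'm)^('n \<times> 'm) \<Rightarrow> complex" where
  "Fv A \<phi> x = (SOME c. dual_value A \<phi> x c)"

lemma cscale_m1: "x + cscale (- 1) x = 0"
  by (simp add: cscale_def vec_eq_iff)

lemma e0_sa: "mat_adj e0 = e0"
  by (simp add: e0_def mat_adj_tens mat_adj_one)

context
  fixes A :: "(complex^'n::finite^'n) set" and C :: "(complex^'m::finite^'m \<Rightarrow> complex^'m^'m) set"
    and \<phi> :: "complex^'n^'n \<Rightarrow> complex^'m^'m"
  assumes ros: "real_operator_system A" and mc: "mapping_cone C" and cpos: "C_positive A C \<phi>"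
begin

lemma pos: "\<forall>\<alpha>\<in>C. positive_map \<alpha>"
  using mc unfolding mapping_cone_def by blast
lemma Asa: "\<forall>a\<in>A. mat_adj a = a"
  using ros unfolding real_operator_system_def by blast
lemma one_A: "mat 1 \<in> A"
  using ros unfolding real_operator_system_def by blast

lemma P_iff: "x \<in> P_cone A C \<longleftrightarrow> x \<in> tens_space A \<and> mat_adj x = x \<and> x \<in> K0 C"
  by (simp add: P_cone_def K0_def)

lemma zero_P: "0 \<in> P_cone A C"
  unfolding P_iff by (intro conjI V_zero K0_zero[OF pos]) simp

lemma cpos': "x \<in> P_cone A C \<Longrightarrow> dual_value A \<phi> x c \<Longrightarrow> c \<in> \<real> \<and> 0 \<le> Re c"
  using cpos unfolding C_positive_def by blast

lemma dv_zero: "dual_value A \<phi> 0 d \<Longrightarrow> d = 0"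
proof -
  assume h: "dual_value A \<phi> 0 d"
  have h2: "dual_value A \<phi> 0 (- d)" using dv_cscale[OF h, of "-1"] by simp
  have "d \<in> \<real>" "0 \<le> Re d" using cpos'[OF zero_P h] by auto
  moreover have "0 \<le> Re (- d)" using cpos'[OF zero_P h2] by auto
  ultimately show "d = 0" by (simp add: complex_eq_iff complex_is_Real_iff)
qed

lemma dv_unique: "dual_value A \<phi> x c1 \<Longrightarrow> dual_value A \<phi> x c2 \<Longrightarrow> c1 = c2"
proof -
  assume h1: "dual_value A \<phi> x c1" and h2: "dual_value A \<phi> x c2"
  have "dual_value A \<phi> (x + cscale (- 1) x) (c1 + (- 1) * c2)"
    by (rule dv_add[OF h1 dv_cscale[OF h2]])
  then have "c1 + (- 1) * c2 = 0" unfolding cscale_m1 by (rule dv_zero)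
  then show ?thesis by simp
qed

lemma F_eq: "dual_value A \<phi> x c \<Longrightarrow> Fv A \<phi> x = c"
  unfolding Fv_def by (rule some_equality) (auto intro: dv_unique)

lemma F_V: "x \<in> tens_space A \<Longrightarrow> dual_value A \<phi> x (Fv A \<phi> x)"
  unfolding Fv_def using tens_space_dv by (rule someI_ex)

lemma F_add: "x \<in> tens_space A \<Longrightarrow> y \<in> tens_space A \<Longrightarrow> Fv A \<phi> (x + y) = Fv A \<phi> x + Fv A \<phi> y"
  by (rule F_eq[OF dv_add[OF F_V F_V]])

lemma F_cscale: "x \<in> tens_space A \<Longrightarrow> Fv A \<phi> (cscale c x) = c * Fv A \<phi> x"
  by (rule F_eq[OF dv_cscale[OF F_V]])

lemma F_scaleR: "x \<in> tens_space A \<Longrightarrow> Fv A \<phi> (r *\<^sub>R x) = of_real r * Fv A \<phi> x"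
  using F_cscale[of x "of_real r"] by (simp add: cscale_of_real)

lemma F_uminus: "x \<in> tens_space A \<Longrightarrow> Fv A \<phi> (- x) = - Fv A \<phi> x"
  using F_scaleR[of x "-1"] by simp

lemma F_diff: "x \<in> tens_space A \<Longrightarrow> y \<in> tens_space A \<Longrightarrow> Fv A \<phi> (x - y) = Fv A \<phi> x - Fv A \<phi> y"
  using F_add[of x "- y"] F_uminus[of y] V_scaleR[of y A "-1"] by simp

lemma F_P: "x \<in> P_cone A C \<Longrightarrow> Fv A \<phi> x \<in> \<real> \<and> 0 \<le> Re (Fv A \<phi> x)"
  using cpos'[OF _ F_V] P_iff by blast

lemma e0_V: "(e0 :: complex^('n \<times> 'm)^('n \<times> 'm)) \<in> tens_space A"
  unfolding e0_def by (rule V_tens[OF one_A])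

lemma e0_sa': "mat_adj (e0 :: complex^('n \<times> 'm)^('n \<times> 'm)) = e0"
  by (rule e0_sa)

lemma e0_P: "e0 \<in> P_cone A C"
  unfolding P_iff by (intro conjI e0_V e0_sa' e0_K0[OF pos])

lemma shiftP:
  assumes "v \<in> tens_space A" "mat_adj v = v" "v + t *\<^sub>R e0 \<in> K0 C"
  shows "v + t *\<^sub>R e0 \<in> P_cone A C"
  unfolding P_iff using assms e0_V e0_sa' by (simp add: V_add V_scaleR mat_adj_add mat_adj_scaleR)

lemma F_real:
  assumes "x \<in> tens_space A" "mat_adj x = x"
  shows "Fv A \<phi> x \<in> \<real>"
proof -
  obtain t where t: "x + t *\<^sub>R e0 \<in> K0 C" using order_unit[OF pos assms(2)] unfolding OU_def by blast
  have "Fv A \<phi> (x + t *\<^sub>R e0) \<in> \<real>" using F_P[OF shiftP[OF assms t]] by blast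
  moreover have "Fv A \<phi> (x + t *\<^sub>R e0) = Fv A \<phi> x + of_real t * Fv A \<phi> e0"
    using assms(1) e0_V by (simp add: F_add V_scaleR F_scaleR)
  moreover have "Fv A \<phi> e0 \<in> \<real>" using F_P[OF e0_P] by blast
  ultimately have "Fv A \<phi> x + of_real t * Fv A \<phi> e0 - of_real t * Fv A \<phi> e0 \<in> \<real>"
    by (intro Reals_diff Reals_mult) auto
  then show ?thesis by simp
qed

lemma F_of_real: "x \<in> tens_space A \<Longrightarrow> mat_adj x = x \<Longrightarrow> Fv A \<phi> x = of_real (Re (Fv A \<phi> x))"
  using F_real by (simp add: complex_eq_iff complex_is_Real_iff)


lemma V_uminus: "x \<in> tens_space A \<Longrightarrow> - x \<in> tens_space A"
  using V_scaleR[of x A "-1"] by simp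

lemma sep:
  "\<exists>w :: complex^('n \<times> 'm)^('n \<times> 'm).
     (\<forall>k. mat_adj k = k \<and> k \<in> K0 C \<longrightarrow> 0 \<le> inner w k) \<and>
     (\<forall>v\<in>tens_space A. mat_adj v = v \<longrightarrow> inner w v = Re (Fv A \<phi> v))"
proof -
  define f where "f = Re (Fv A \<phi> e0)"
  have fe: "Fv A \<phi> e0 = of_real f" unfolding f_def using F_of_real[OF e0_V e0_sa'] .
  have f0: "f \<ge> 0" unfolding f_def using F_P[OF e0_P] by blast
  have Fshift: "Fv A \<phi> (v + t *\<^sub>R e0) = Fv A \<phi> v + of_real (t * f)" if "v \<in> tens_space A" for v t
    using that e0_V by (simp add: F_add V_scaleR F_scaleR fe)
  show ?thesis
  proof (cases "f = 0")
    case True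
    have "Re (Fv A \<phi> v) = 0" if v: "v \<in> tens_space A" "mat_adj v = v" for v
    proof -
      obtain t where t: "v + t *\<^sub>R e0 \<in> K0 C" "- v + t *\<^sub>R e0 \<in> K0 C"
        using order_unit[OF pos v(2)] unfolding OU_def by blast
      have mv: "mat_adj (- v) = - v" using v(2) by (simp add: mat_adj_uminus)
      have "0 \<le> Re (Fv A \<phi> (v + t *\<^sub>R e0))" using F_P[OF shiftP[OF v t(1)]] by blast
      moreover have "0 \<le> Re (Fv A \<phi> (- v + t *\<^sub>R e0))" using F_P[OF shiftP[OF V_uminus[OF v(1)] mv t(2)]] by blast
      ultimately show ?thesis using Fshift[OF v(1)] Fshift[OF V_uminus[OF v(1)]] F_uminus[OF v(1)] True
        by simp
    qed
    then show ?thesis by (intro exI[of _ 0]) auto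
  next
    case False
    then have fpos: "f > 0" using f0 by simp
    define K where "K = {k :: complex^('n \<times> 'm)^('n \<times> 'm). mat_adj k = k \<and> k \<in> K0 C}"
    define U where "U = {v \<in> tens_space A. mat_adj v = v \<and> Fv A \<phi> v = 0}"
    define AH where "AH = {h :: complex^('n \<times> 'm)^('n \<times> 'm). mat_adj h = - h}"
    define S where "S = {e0 + k + u + h | k u h. k \<in> K \<and> u \<in> U \<and> h \<in> AH}"
    have K_add: "k1 + k2 \<in> K" if "k1 \<in> K" "k2 \<in> K" for k1 k2
      using that unfolding K_def by (auto simp: mat_adj_add intro: K0_add[OF pos])
    have K_scale: "r *\<^sub>R k \<in> K" if "k \<in> K" "r \<ge> 0" for k r
      using that unfolding K_def by (auto simp: mat_adj_scaleR intro: K0_scaleR[OF pos])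
    have K_zero: "0 \<in> K" unfolding K_def using K0_zero[OF pos] by simp
    have U_add: "u1 + u2 \<in> U" if "u1 \<in> U" "u2 \<in> U" for u1 u2
      using that unfolding U_def by (auto simp: mat_adj_add V_add F_add)
    have U_scale: "r *\<^sub>R u \<in> U" if "u \<in> U" for u r
      using that unfolding U_def by (auto simp: mat_adj_scaleR V_scaleR F_scaleR)
    have U_zero: "0 \<in> U" unfolding U_def using F_eq[OF dv_nil] by (simp add: V_zero)
    have AH_add: "h1 + h2 \<in> AH" if "h1 \<in> AH" "h2 \<in> AH" for h1 h2
      using that unfolding AH_def by (auto simp: mat_adj_add)
    have AH_scale: "r *\<^sub>R h \<in> AH" if "h \<in> AH" for h r
      using that unfolding AH_def by (auto simp: mat_adj_scaleR)
    have AH_zero: "0 \<in> AH" unfolding AH_def by simp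
    have e0K: "e0 \<in> K" unfolding K_def using e0_sa' e0_K0[OF pos] by simp
    have inS: "e0 + k + u + h \<in> S" if "k \<in> K" "u \<in> U" "h \<in> AH" for k u h
      unfolding S_def using that by blast
    have cvx: "convex S"
    proof (rule convexI)
      fix x y :: "complex^('n \<times> 'm)^('n \<times> 'm)" and a b :: real
      assume "x \<in> S" "y \<in> S" "0 \<le> a" "0 \<le> b" "a + b = 1"
      then obtain k1 u1 h1 k2 u2 h2 where x: "x = e0 + k1 + u1 + h1" "k1 \<in> K" "u1 \<in> U" "h1 \<in> AH"
        and y: "y = e0 + k2 + u2 + h2" "k2 \<in> K" "u2 \<in> U" "h2 \<in> AH"
        and ab: "0 \<le> a" "0 \<le> b" "a + b = 1" unfolding S_def by blast
      have "a *\<^sub>R x + b *\<^sub>R y = (a + b) *\<^sub>R e0 + (a *\<^sub>R k1 + b *\<^sub>R k2) + (a *\<^sub>R u1 + b *\<^sub>R u2) + (a *\<^sub>R h1 + b *\<^sub>R h2)"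
        unfolding x y by (simp add: algebra_simps)
      also have "\<dots> = e0 + (a *\<^sub>R k1 + b *\<^sub>R k2) + (a *\<^sub>R u1 + b *\<^sub>R u2) + (a *\<^sub>R h1 + b *\<^sub>R h2)"
        using ab by simp
      finally show "a *\<^sub>R x + b *\<^sub>R y \<in> S"
        using x y ab by (simp only:) (intro inS K_add K_scale U_add U_scale AH_add AH_scale; simp)
    qed
    have notin: "0 \<notin> S"
    proof
      assume "0 \<in> S"
      then obtain k u h where kuh: "0 = e0 + k + u + h" "k \<in> K" "u \<in> U" "h \<in> AH"
        unfolding S_def by blast
      have ka: "mat_adj k = k" "k \<in> K0 C" using kuh(2) unfolding K_def by auto
      have ua: "mat_adj u = u" "u \<in> tens_space A" "Fv A \<phi> u = 0" using kuh(3) unfolding U_def by auto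
      have ha: "mat_adj h = - h" using kuh(4) unfolding AH_def by auto
      have "mat_adj (e0 + k + u + h) = e0 + k + u - h"
        by (simp add: mat_adj_add e0_sa' ka ua ha)
      then have "e0 + k + u - h = 0" using kuh(1) by (metis mat_adj_zero)
      then have "(e0 + k + u + h) - (e0 + k + u - h) = 0" using kuh(1) by simp
      then have "2 *\<^sub>R h = 0" by (simp add: algebra_simps scaleR_2)
      then have h0: "h = 0" by simp
      have s0: "e0 + k + u = 0" using kuh(1) h0 by simp
      have "k = (e0 + k + u) - e0 - u" by (simp add: algebra_simps)
      then have kk: "k = - e0 - u" using s0 by simp
      have kV: "k \<in> tens_space A" unfolding kk by (intro V_diff V_uminus e0_V ua(2))
      have "k \<in> P_cone A C" unfolding P_iff using kV ka by simp
      then have "0 \<le> Re (Fv A \<phi> k)" using F_P by blast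
      moreover have "Fv A \<phi> k = - of_real f"
        unfolding kk using e0_V ua by (simp add: F_diff F_uminus V_uminus fe)
      ultimately show False using fpos by simp
    qed
    obtain a where a: "a \<noteq> 0" "\<forall>x\<in>S. 0 \<le> inner a x"
      using separating_hyperplane_set_0[OF cvx notin] by blast
    have key: "0 \<le> inner a (k + u + h)" if "k \<in> K" "u \<in> U" "h \<in> AH" for k u h
    proof (rule lim0[of "inner a e0"])
      fix t :: real assume "t > 0"
      have "e0 + t *\<^sub>R k + t *\<^sub>R u + t *\<^sub>R h \<in> S"
        using that \<open>t > 0\<close> by (intro inS K_scale U_scale AH_scale) auto
      then have "0 \<le> inner a (e0 + t *\<^sub>R k + t *\<^sub>R u + t *\<^sub>R h)" using a(2) by blast
      then show "0 \<le> inner a e0 + t * inner a (k + u + h)"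
        by (simp add: inner_add_right algebra_simps)
    qed
    have geK: "0 \<le> inner a k" if "k \<in> K" for k
      using key[OF that U_zero AH_zero] by simp
    have U0: "inner a u = 0" if "u \<in> U" for u
      using key[OF K_zero that AH_zero] key[OF K_zero U_scale[OF that, of "-1"] AH_zero] by simp
    have AH0: "inner a h = 0" if "h \<in> AH" for h
      using key[OF K_zero U_zero that] key[OF K_zero U_zero AH_scale[OF that, of "-1"]] by simp
    have ia0: "inner a e0 > 0"
    proof (rule ccontr)
      assume "\<not> inner a e0 > 0"
      then have ia: "inner a e0 = 0" using geK[OF e0K] by simp
      have sa0: "inner a y = 0" if ya: "mat_adj y = y" for y
      proof -
        obtain t where t: "y + t *\<^sub>R e0 \<in> K0 C" "- y + t *\<^sub>R e0 \<in> K0 C"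
          using order_unit[OF pos ya] unfolding OU_def by blast
        have "y + t *\<^sub>R e0 \<in> K" "- y + t *\<^sub>R e0 \<in> K"
          unfolding K_def using t ya e0_sa' by (auto simp: mat_adj_add mat_adj_scaleR mat_adj_uminus mat_adj_minus)
        then have "0 \<le> inner a (y + t *\<^sub>R e0)" "0 \<le> inner a (- y + t *\<^sub>R e0)" using geK by blast+
        then show ?thesis using ia by (simp add: inner_add_right inner_diff_right)
      qed
      have "inner a z = 0" for z
      proof -
        have "z = Hm z + (z - Hm z)" by simp
        moreover have "inner a (Hm z) = 0" by (rule sa0[OF Hm_adj])
        moreover have "z - Hm z \<in> AH"
        proof -
          have "mat_adj (z - Hm z) = mat_adj z - Hm z" by (simp add: mat_adj_minus Hm_adj)
          moreover have "mat_adj z - Hm z = - (z - Hm z)"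
            by (simp add: Hm_def algebra_simps flip: scaleR_2)
          ultimately show ?thesis unfolding AH_def by simp
        qed
        ultimately show ?thesis using AH0 by (metis add_0 inner_add_right)
      qed
      then have "inner a a = 0" by blast
      then show False using a(1) by simp
    qed
    define w where "w = (f / inner a e0) *\<^sub>R a"
    have "\<forall>k. mat_adj k = k \<and> k \<in> K0 C \<longrightarrow> 0 \<le> inner w k"
    proof (intro allI impI)
      fix k :: "complex^('n \<times> 'm)^('n \<times> 'm)" assume "mat_adj k = k \<and> k \<in> K0 C"
      then have "k \<in> K" unfolding K_def by blast
      then show "0 \<le> inner w k" unfolding w_def using geK fpos ia0 by simp
    qed
    moreover have "\<forall>v\<in>tens_space A. mat_adj v = v \<longrightarrow> inner w v = Re (Fv A \<phi> v)"
    proof (intro ballI impI)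
      fix v :: "complex^('n \<times> 'm)^('n \<times> 'm)" assume v: "v \<in> tens_space A" "mat_adj v = v"
      define r where "r = Re (Fv A \<phi> v) / f"
      have Fv: "Fv A \<phi> v = of_real (Re (Fv A \<phi> v))" by (rule F_of_real[OF v])
      have "v - r *\<^sub>R e0 \<in> U"
      proof -
        have "v - r *\<^sub>R e0 \<in> tens_space A" by (intro V_diff V_scaleR v(1) e0_V)
        moreover have "mat_adj (v - r *\<^sub>R e0) = v - r *\<^sub>R e0" by (simp add: mat_adj_minus mat_adj_scaleR v(2) e0_sa')
        moreover have "Fv A \<phi> (v - r *\<^sub>R e0) = 0"
        proof -
          have "Fv A \<phi> (v - r *\<^sub>R e0) = Fv A \<phi> v - of_real r * of_real f"
            using v(1) e0_V by (simp add: F_diff V_scaleR F_scaleR fe)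
          also have "\<dots> = 0"
          proof -
            have rr: "r * f = Re (Fv A \<phi> v)" unfolding r_def using fpos by simp
            show ?thesis by (subst Fv) (simp only: of_real_mult[symmetric] rr diff_self)
          qed
          finally show ?thesis .
        qed
        ultimately show ?thesis unfolding U_def by blast
      qed
      then have "inner a (v - r *\<^sub>R e0) = 0" by (rule U0)
      then have "inner a v = r * inner a e0" by (simp add: inner_diff_right)
      then show "inner w v = Re (Fv A \<phi> v)" unfolding w_def r_def using fpos ia0 by simp
    qed
    ultimately show ?thesis by blast
  qed
qed


lemma main_ctx:
  "\<exists>\<psi> :: complex^'n^'n \<Rightarrow> complex^'m^'m.
     complex_linear_map \<psi> \<and> C_positive UNIV C \<psi> \<and> (\<forall>a\<in>A. \<psi> a = \<phi> a)"
proof -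
  obtain w :: "complex^('n \<times> 'm)^('n \<times> 'm)" where
    wK: "\<And>k. mat_adj k = k \<Longrightarrow> k \<in> K0 C \<Longrightarrow> 0 \<le> inner w k" and
    wV: "\<And>v. v \<in> tens_space A \<Longrightarrow> mat_adj v = v \<Longrightarrow> inner w v = Re (Fv A \<phi> v)"
    using sep by blast
  define L where "L z = complex_of_real (inner w (Hm z)) + \<i> * complex_of_real (inner w (Hs z))" for z
  define \<psi> where "\<psi> a = (\<chi> k l. L (tens a (Eij k l)))" for a :: "complex^'n^'n"
  have L_add: "L (x + y) = L x + L y" for x y
    unfolding L_def by (simp add: Hm_add Hs_add inner_add_right algebra_simps)
  have L_scaleR: "L (r *\<^sub>R x) = of_real r * L x" for r x
    unfolding L_def by (simp add: Hm_scaleR Hs_scaleR algebra_simps)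
  have iid: "- b + \<i> * a = \<i> * (a + \<i> * b)" for a b :: complex
    by (simp add: complex_eq_iff)
  have L_i: "L (cscale \<i> z) = \<i> * L z" for z
  proof -
    have "L (cscale \<i> z) = - complex_of_real (inner w (Hs z)) + \<i> * complex_of_real (inner w (Hm z))"
      unfolding L_def Hm_i Hs_i inner_minus_right of_real_minus ..
    then show ?thesis unfolding L_def by (simp only: iid)
  qed
  have L_cscale: "L (cscale c z) = c * L z" for c z
  proof -
    have "L (cscale c z) = L (Re c *\<^sub>R z + Im c *\<^sub>R cscale \<i> z)"
      by (rule arg_cong[where f=L], rule cscale_real_imag)
    also have "\<dots> = of_real (Re c) * L z + of_real (Im c) * (\<i> * L z)"
      by (simp only: L_add L_scaleR L_i)
    also have "\<dots> = (of_real (Re c) + \<i> * of_real (Im c)) * L z" by (simp add: algebra_simps)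
    also have "\<dots> = c * L z" by (simp add: complex_eq[symmetric])
    finally show ?thesis .
  qed
  have L_zero: "L 0 = 0" using L_scaleR[of 0 0] by simp
  have L_sum: "L (\<Sum>i\<in>S. f i) = (\<Sum>i\<in>S. L (f i))" for S :: "'x set" and f
    by (induction S rule: infinite_finite_induct) (simp_all add: L_zero L_add)
  have L_V: "L z = Fv A \<phi> z" if z: "z \<in> tens_space A" for z
  proof -
    have hm: "Hm z \<in> tens_space A" unfolding Hm_def by (intro V_scaleR V_add z V_adj[OF Asa z])
    have hs: "Hs z \<in> tens_space A" unfolding Hs_def Hm_def
      by (intro V_scaleR V_add V_cscale z V_adj[OF Asa])
    have "L z = Fv A \<phi> (Hm z) + \<i> * Fv A \<phi> (Hs z)"
      unfolding L_def wV[OF hm Hm_adj] wV[OF hs Hm_adj[of "cscale (- \<i>) z", folded Hs_def]]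
      using F_of_real[OF hm Hm_adj] F_of_real[OF hs Hm_adj[of "cscale (- \<i>) z", folded Hs_def]] by simp
    also have "\<dots> = Fv A \<phi> (Hm z + cscale \<i> (Hs z))"
      using hm hs by (simp add: F_add F_cscale V_cscale)
    also have "\<dots> = Fv A \<phi> z" by (simp only: HmHs)
    finally show ?thesis .
  qed
  have L_K: "L z = of_real (inner w z)" if "mat_adj z = z" for z
    unfolding L_def using that by (simp add: Hm_sa Hs_sa0)
  have clm: "complex_linear_map \<psi>"
    unfolding complex_linear_map_def
  proof (intro conjI allI)
    fix x y :: "complex^'n^'n"
    show "\<psi> (x + y) = \<psi> x + \<psi> y"
      unfolding \<psi>_def by (simp add: vec_eq_iff tens_add1 L_add)
  next
    fix c and x :: "complex^'n^'n"
    show "\<psi> (cscale c x) = cscale c (\<psi> x)"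
      unfolding \<psi>_def tens_cscale1 L_cscale by (simp add: vec_eq_iff cscale_def)
  qed
  have agree: "\<forall>a\<in>A. \<psi> a = \<phi> a"
  proof
    fix a assume a: "a \<in> A"
    have "\<psi> a $ k $ l = \<phi> a $ k $ l" for k l
    proof -
      have "\<psi> a $ k $ l = L (tens a (Eij k l))" by (simp add: \<psi>_def)
      also have "\<dots> = Fv A \<phi> (tens a (Eij k l))" by (rule L_V[OF V_tens[OF a]])
      also have "\<dots> = trace (\<phi> a ** transpose (Eij k l))" by (rule F_eq[OF dv_single[OF a]])
      also have "\<dots> = \<phi> a $ k $ l" by (rule trace_Eij)
      finally show ?thesis .
    qed
    then show "\<psi> a = \<phi> a" by (simp add: vec_eq_iff)
  qed
  have trpsi: "trace (\<psi> a ** transpose b) = L (tens a b)" for a b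
  proof -
    have "trace (\<psi> a ** transpose b) = (\<Sum>k\<in>UNIV. \<Sum>l\<in>UNIV. L (tens a (Eij k l)) * b $ k $ l)"
      by (simp add: trace_mult_transpose \<psi>_def)
    also have "\<dots> = (\<Sum>k\<in>UNIV. \<Sum>l\<in>UNIV. L (cscale (b $ k $ l) (tens a (Eij k l))))"
      by (simp add: L_cscale mult.commute)
    also have "\<dots> = L (\<Sum>k\<in>UNIV. \<Sum>l\<in>UNIV. cscale (b $ k $ l) (tens a (Eij k l)))"
      by (simp add: L_sum)
    also have "\<dots> = L (tens a b)" by (simp only: tens_expand[symmetric])
    finally show ?thesis .
  qed
  have cposU: "C_positive UNIV C \<psi>"
    unfolding C_positive_def
  proof (intro ballI allI impI)
    fix x c
    assume xP: "x \<in> P_cone UNIV C" and dv: "dual_value UNIV \<psi> x c"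
    have xs: "mat_adj x = x" "x \<in> K0 C" using xP unfolding P_cone_def K0_def by auto
    obtain N a and b :: "nat \<Rightarrow> complex^'m^'m" where ab: "x = (\<Sum>i<N. tens (a i) (b i))" "c = (\<Sum>i<N. trace (\<psi> (a i) ** transpose (b i)))"
      using dv unfolding dual_value_def by blast
    have "c = L x" unfolding ab trpsi L_sum by simp
    also have "\<dots> = of_real (inner w x)" by (rule L_K[OF xs(1)])
    finally show "c \<in> \<real> \<and> 0 \<le> Re c" using wK[OF xs] by simp
  qed
  show ?thesis using clm cposU agree by blast
qed

end


theorem theorem1:
  fixes A :: "(complex^'n^'n) set"
    and C :: "(complex^'m^'m \<Rightarrow> complex^'m^'m) set"
    and \<phi> :: "complex^'n^'n \<Rightarrow> complex^'m^'m"
  assumes "real_operator_system A"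
    and "mapping_cone C"
    and "real_linear_on A \<phi>"
    and "C_positive A C \<phi>"
  shows "\<exists>\<psi> :: complex^'n^'n \<Rightarrow> complex^'m^'m.
           complex_linear_map \<psi> \<and> C_positive UNIV C \<psi> \<and> (\<forall>a\<in>A. \<psi> a = \<phi> a)"
  by (rule main_ctx[OF assms(1) assms(2) assms(4)])

end
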